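(* Let $w$ be an instance of MAXCUT on $n$ vertices and let $(S,\bar S)$ be a maximal cut of $w$ with $\xi(x)\ge\gamma\,\iota(x)$ for every vertex $x$, where $\gamma>\frac{2}{1-\sqrt{1-h(w_{cut})^2}}$. Then the matrix $W+D'$ is positive semidefinite of rank $n-1$.
   Context: An instance of MAXCUT is a vertex set $V=\{1,\dots,n\}$ with a symmetric $w:V\times V\to[0,\infty)$ with zero diagonal and connected support; $W$ is the matrix $W_{ij}=w(i,j)$. A cut $(S,\bar S)$ is maximal if $\sum_{a\in S,b\in\bar S}w(a,b)$ is maximum. For the cut: $\xi(x)$ is the total weight of edges at $x$ crossing the cut, $\iota(x)$ the total weight of edges at $x$ not crossing it. $w_{cut}(u,v)=w(u,v)$ if $u,v$ are on opposite sides of the cut and $0$ otherwise; $w_{uncut}=w-w_{cut}$; $W^{cut},W^{uncut}$ are the corresponding matrices. $D^{cut},D^{uncut}$ are diagonal with $D^{cut}_{ii}=\sum_jW^{cut}_{ij}$, $D^{uncut}_{ii}=\sum_jW^{uncut}_{ij}$, and $D'=D^{cut}-D^{uncut}$. For a weight function $u$, $\tau_u(A)=\sum_{a\in A,b\notin A}u(a,b)$, $\mu_u(A)=\sum_{a\in A,v\in V}u(a,v)$ and the Cheeger constant is $h(u)=\min_{\emptyset\ne A\subsetneq V}\frac{\tau_u(A)}{\min\{\mu_u(A),\mu_u(\bar A)\}}$. *)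

theory Defs
  imports "HOL-Analysis.Analysis"
begin

text \<open>Vertices are the elements of a finite type 'n (so V = UNIV, n = CARD('n)).
  A weight function is w :: 'n => 'n => real.\<close>

definition maxcut_instance :: "('n::finite \<Rightarrow> 'n \<Rightarrow> real) \<Rightarrow> bool" where
  "maxcut_instance w \<longleftrightarrow>
     (\<forall>i j. w i j = w j i) \<and> (\<forall>i j. 0 \<le> w i j) \<and> (\<forall>i. w i i = 0) \<and>
     (\<forall>i j. (\<lambda>a b. 0 < w a b)\<^sup>*\<^sup>* i j)"

definition cut_weight :: "('n::finite \<Rightarrow> 'n \<Rightarrow> real) \<Rightarrow> 'n set \<Rightarrow> real" where
  "cut_weight w S = (\<Sum>a\<in>S. \<Sum>b\<in>-S. w a b)"

definition is_max_cut :: "('n::finite \<Rightarrow> 'n \<Rightarrow> real) \<Rightarrow> 'n set \<Rightarrow> bool" where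
  "is_max_cut w S \<longleftrightarrow> (\<forall>T. cut_weight w T \<le> cut_weight w S)"

definition w_cut :: "('n \<Rightarrow> 'n \<Rightarrow> real) \<Rightarrow> 'n set \<Rightarrow> 'n \<Rightarrow> 'n \<Rightarrow> real" where
  "w_cut w S u v = (if (u \<in> S) \<noteq> (v \<in> S) then w u v else 0)"

definition w_uncut :: "('n \<Rightarrow> 'n \<Rightarrow> real) \<Rightarrow> 'n set \<Rightarrow> 'n \<Rightarrow> 'n \<Rightarrow> real" where
  "w_uncut w S u v = w u v - w_cut w S u v"

text \<open>xi(x): total weight of cut edges at x; iota(x): total weight of uncut edges at x.\<close>
definition xi :: "('n::finite \<Rightarrow> 'n \<Rightarrow> real) \<Rightarrow> 'n set \<Rightarrow> 'n \<Rightarrow> real" where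
  "xi w S x = (\<Sum>y\<in>UNIV. w_cut w S x y)"

definition iota :: "('n::finite \<Rightarrow> 'n \<Rightarrow> real) \<Rightarrow> 'n set \<Rightarrow> 'n \<Rightarrow> real" where
  "iota w S x = (\<Sum>y\<in>UNIV. w_uncut w S x y)"

definition wmat :: "('n::finite \<Rightarrow> 'n \<Rightarrow> real) \<Rightarrow> real^'n^'n" where
  "wmat u = (\<chi> i j. u i j)"

definition degmat :: "('n::finite \<Rightarrow> 'n \<Rightarrow> real) \<Rightarrow> real^'n^'n" where
  "degmat u = (\<chi> i j. if i = j then (\<Sum>k\<in>UNIV. u i k) else 0)"

text \<open>D' = D^cut - D^uncut\<close>
definition Dprime :: "('n::finite \<Rightarrow> 'n \<Rightarrow> real) \<Rightarrow> 'n set \<Rightarrow> real^'n^'n" where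
  "Dprime w S = degmat (w_cut w S) - degmat (w_uncut w S)"

definition tau :: "('n::finite \<Rightarrow> 'n \<Rightarrow> real) \<Rightarrow> 'n set \<Rightarrow> real" where
  "tau u A = (\<Sum>a\<in>A. \<Sum>b\<in>-A. u a b)"

definition mu :: "('n::finite \<Rightarrow> 'n \<Rightarrow> real) \<Rightarrow> 'n set \<Rightarrow> real" where
  "mu u A = (\<Sum>a\<in>A. \<Sum>v\<in>UNIV. u a v)"

definition cheeger :: "('n::finite \<Rightarrow> 'n \<Rightarrow> real) \<Rightarrow> real" where
  "cheeger u = Min ((\<lambda>A. tau u A / min (mu u A) (mu u (-A))) ` {A. A \<noteq> {} \<and> A \<noteq> UNIV})"

definition psd :: "real^'n^'n \<Rightarrow> bool" where
  "psd M \<longleftrightarrow> (\<forall>v. 0 \<le> v \<bullet> (M *v v))"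

end

theory Submission
  imports Defs
begin

definition dg :: "('n::finite \<Rightarrow> 'n \<Rightarrow> real) \<Rightarrow> 'n \<Rightarrow> real" where
  "dg c i = (\<Sum>j\<in>UNIV. c i j)"

lemma mu_dg: "mu c A = (\<Sum>a\<in>A. dg c a)"
  by (simp add: mu_def dg_def)

lemma tau_ind: "tau c T = (\<Sum>i\<in>UNIV. \<Sum>j\<in>UNIV. c i j * (if i \<in> T \<and> j \<notin> T then 1 else 0))"
proof -
  have "(\<Sum>i\<in>UNIV. \<Sum>j\<in>UNIV. c i j * (if i \<in> T \<and> j \<notin> T then 1 else 0))
      = (\<Sum>i\<in>UNIV. if i \<in> T then (\<Sum>j\<in>-T. c i j) else 0)"
    by (rule sum.cong) (auto simp: if_distrib sum.If_cases Compl_eq)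
  also have "\<dots> = (\<Sum>i\<in>T. \<Sum>j\<in>-T. c i j)"
    by (simp add: sum.If_cases)
  finally show ?thesis by (simp add: tau_def)
qed

lemma mu_ind: "mu c T = (\<Sum>i\<in>UNIV. dg c i * (if i \<in> T then 1 else 0))"
  by (simp add: mu_dg sum.If_cases if_distrib)

lemma coarea:
  fixes c :: "'n::finite \<Rightarrow> 'n \<Rightarrow> real" and g :: "'n \<Rightarrow> real"
  assumes c0: "\<And>i j. 0 \<le> c i j" and g0: "\<And>i. 0 \<le> g i" and hh: "0 \<le> hh"
   and lev: "\<And>t. 0 \<le> t \<Longrightarrow> hh * mu c {u. t < g u} \<le> tau c {u. t < g u}"
  shows "hh * (\<Sum>i\<in>UNIV. dg c i * g i) \<le> (\<Sum>i\<in>UNIV. \<Sum>j\<in>UNIV. c i j * max (g i - g j) 0)"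
  using g0 lev
proof (induction "card {u. 0 < g u}" arbitrary: g rule: less_induct)
  case less
  show ?case
  proof (cases "{u. 0 < g u} = {}")
    case True
    then have "\<And>u. g u = 0" using less.prems(1) by (metis empty_iff mem_Collect_eq order_le_less)
    then show ?thesis by simp
  next
    case False
    define T where "T = {u. 0 < g u}"
    define m where "m = Min (g ` T)"
    have fT: "finite T" by simp
    have mT: "m \<in> g ` T" unfolding m_def using False T_def by (intro Min_in) auto
    then obtain u0 where u0: "u0 \<in> T" "g u0 = m" by auto
    have mpos: "0 < m" using u0 T_def by auto
    have mle: "\<And>u. u \<in> T \<Longrightarrow> m \<le> g u" unfolding m_def by auto
    define g' where "g' u = max (g u - m) 0" for u
    have g'0: "\<And>i. 0 \<le> g' i" by (simp add: g'_def)
    have sub1: "{u. 0 < g' u} \<subseteq> T"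
      using mpos by (auto simp: g'_def T_def)
    have sub2: "u0 \<notin> {u. 0 < g' u}" using u0 by (simp add: g'_def)
    have sub: "{u. 0 < g' u} \<subset> T" using sub1 sub2 u0(1) by blast
    have card: "card {u. 0 < g' u} < card {u. 0 < g u}"
      using sub T_def by (metis fT psubset_card_mono)
    have lev': "hh * mu c {u. t < g' u} \<le> tau c {u. t < g' u}" if "0 \<le> t" for t
    proof -
      have "{u. t < g' u} = {u. t + m < g u}" using that by (auto simp: g'_def)
      then show ?thesis using less.prems(2)[of "t + m"] that mpos by simp
    qed
    have IH: "hh * (\<Sum>i\<in>UNIV. dg c i * g' i) \<le> (\<Sum>i\<in>UNIV. \<Sum>j\<in>UNIV. c i j * max (g' i - g' j) 0)"
      using less.hyps[OF card g'0 lev'] by blast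
    have pw: "max (g i - g j) 0 = m * (if i \<in> T \<and> j \<notin> T then 1 else 0) + max (g' i - g' j) 0" for i j
      using mle[of i] mle[of j] less.prems(1)[of i] less.prems(1)[of j] mpos
      by (auto simp: g'_def T_def max_def)
    have pw2: "g i = m * (if i \<in> T then 1 else 0) + g' i" for i
      using mle[of i] less.prems(1)[of i] mpos by (auto simp: g'_def T_def max_def)
    have R: "(\<Sum>i\<in>UNIV. \<Sum>j\<in>UNIV. c i j * max (g i - g j) 0)
       = m * tau c T + (\<Sum>i\<in>UNIV. \<Sum>j\<in>UNIV. c i j * max (g' i - g' j) 0)"
      unfolding pw tau_ind by (simp add: algebra_simps sum.distrib sum_distrib_left)
    have L: "(\<Sum>i\<in>UNIV. dg c i * g i) = m * mu c T + (\<Sum>i\<in>UNIV. dg c i * g' i)"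
      by (subst pw2) (simp add: mu_ind algebra_simps sum.distrib sum_distrib_left)
    have "hh * mu c T \<le> tau c T" using less.prems(2)[of 0] T_def by simp
    then have "m * (hh * mu c T) \<le> m * tau c T" using mpos by simp
    then show ?thesis unfolding R L using IH by (simp add: algebra_simps)
  qed
qed

lemma swap_sym:
  fixes c :: "'n::finite \<Rightarrow> 'n \<Rightarrow> real"
  assumes csym: "\<And>i j. c i j = c j i"
  shows "(\<Sum>i\<in>UNIV. \<Sum>j\<in>UNIV. c i j * F j i) = (\<Sum>i\<in>UNIV. \<Sum>j\<in>UNIV. c i j * F i j)"
  by (subst sum.swap) (simp add: csym)

lemma sum2_pairs:
  "(\<Sum>i\<in>UNIV. \<Sum>j\<in>UNIV. F i j) = (\<Sum>p\<in>UNIV. F (fst p) (snd p))"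
  by (simp add: sum.cartesian_product UNIV_Times_UNIV[symmetric] case_prod_beta del: UNIV_Times_UNIV)

lemma cheeger_step:
  fixes c :: "'n::finite \<Rightarrow> 'n \<Rightarrow> real" and f :: "'n \<Rightarrow> real"
  assumes c0: "\<And>i j. 0 \<le> c i j" and csym: "\<And>i j. c i j = c j i"
   and f0: "\<And>i. 0 \<le> f i" and hh: "0 \<le> hh"
   and lev: "\<And>t. 0 \<le> t \<Longrightarrow> hh * mu c {u. t < f u} \<le> tau c {u. t < f u}"
  shows "2 * (1 - sqrt (1 - hh\<^sup>2)) * (\<Sum>i\<in>UNIV. dg c i * (f i)\<^sup>2)
     \<le> (\<Sum>i\<in>UNIV. \<Sum>j\<in>UNIV. c i j * (f i - f j)\<^sup>2)"
proof -
  define N where "N = (\<Sum>i\<in>UNIV. dg c i * (f i)\<^sup>2)"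
  define A where "A = (\<Sum>i\<in>UNIV. \<Sum>j\<in>UNIV. c i j * (f i - f j)\<^sup>2)"
  define B where "B = (\<Sum>i\<in>UNIV. \<Sum>j\<in>UNIV. c i j * (f i + f j)\<^sup>2)"
  define P where "P = (\<Sum>i\<in>UNIV. \<Sum>j\<in>UNIV. c i j * \<bar>(f i)\<^sup>2 - (f j)\<^sup>2\<bar>)"
  define Q where "Q = (\<Sum>i\<in>UNIV. \<Sum>j\<in>UNIV. c i j * max ((f i)\<^sup>2 - (f j)\<^sup>2) 0)"
  have N0: "0 \<le> N" unfolding N_def dg_def using c0 by (intro sum_nonneg mult_nonneg_nonneg) auto
  have A0: "0 \<le> A" unfolding A_def using c0 by (intro sum_nonneg mult_nonneg_nonneg) auto
  have levg: "hh * mu c {u. t < (f u)\<^sup>2} \<le> tau c {u. t < (f u)\<^sup>2}" if "0 \<le> t" for t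
  proof -
    have "{u. t < (f u)\<^sup>2} = {u. sqrt t < f u}"
    proof (intro Collect_cong iffI)
      fix u assume "t < (f u)\<^sup>2" then show "sqrt t < f u" using f0[of u] real_less_lsqrt by auto
    next
      fix u assume "sqrt t < f u"
      then have "(sqrt t)\<^sup>2 < (f u)\<^sup>2" using that by (intro power_strict_mono) auto
      then show "t < (f u)\<^sup>2" using that by simp
    qed
    then show ?thesis using lev[of "sqrt t"] that by simp
  qed
  have Q: "hh * N \<le> Q" unfolding N_def Q_def
    using coarea[of c "\<lambda>u. (f u)\<^sup>2" hh] c0 hh levg by simp
  have PQ: "P = 2 * Q"
  proof -
    have "P = (\<Sum>i\<in>UNIV. \<Sum>j\<in>UNIV. c i j * max ((f i)\<^sup>2 - (f j)\<^sup>2) 0)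
            + (\<Sum>i\<in>UNIV. \<Sum>j\<in>UNIV. c i j * max ((f j)\<^sup>2 - (f i)\<^sup>2) 0)"
      unfolding P_def sum.distrib[symmetric] by (intro sum.cong refl) (simp add: algebra_simps max_def abs_if)
    also have "(\<Sum>i\<in>UNIV. \<Sum>j\<in>UNIV. c i j * max ((f j)\<^sup>2 - (f i)\<^sup>2) 0) = Q"
      unfolding Q_def by (rule swap_sym[OF csym])
    finally show ?thesis unfolding Q_def by simp
  qed
  have CS: "P\<^sup>2 \<le> A * B"
  proof -
    have "P = (\<Sum>p\<in>UNIV. (sqrt (c (fst p) (snd p)) * \<bar>f (fst p) - f (snd p)\<bar>) *
                 (sqrt (c (fst p) (snd p)) * \<bar>f (fst p) + f (snd p)\<bar>))"
      unfolding P_def sum2_pairs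
    proof (rule sum.cong)
      fix p :: "'n \<times> 'n"
      have "sqrt (c (fst p) (snd p)) * sqrt (c (fst p) (snd p)) = c (fst p) (snd p)"
        using c0 by simp
      moreover have "\<bar>(f (fst p))\<^sup>2 - (f (snd p))\<^sup>2\<bar> = \<bar>f (fst p) - f (snd p)\<bar> * \<bar>f (fst p) + f (snd p)\<bar>"
        by (simp add: power2_eq_square abs_mult[symmetric] algebra_simps)
      ultimately show "c (fst p) (snd p) * \<bar>(f (fst p))\<^sup>2 - (f (snd p))\<^sup>2\<bar> =
          sqrt (c (fst p) (snd p)) * \<bar>f (fst p) - f (snd p)\<bar> *
          (sqrt (c (fst p) (snd p)) * \<bar>f (fst p) + f (snd p)\<bar>)"
        by (metis mult.assoc mult.left_commute)
    qed simp
    also have "\<dots>\<^sup>2 \<le> (\<Sum>p\<in>UNIV. (sqrt (c (fst p) (snd p)) * \<bar>f (fst p) - f (snd p)\<bar>)\<^sup>2) *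
                      (\<Sum>p\<in>UNIV. (sqrt (c (fst p) (snd p)) * \<bar>f (fst p) + f (snd p)\<bar>)\<^sup>2)"
      by (rule Cauchy_Schwarz_ineq_sum)
    also have "\<dots> = A * B"
      unfolding A_def B_def sum2_pairs using c0 by (simp add: power_mult_distrib)
    finally show ?thesis .
  qed
  have AB: "A + B = 4 * N"
  proof -
    have "A + B = (\<Sum>i\<in>UNIV. \<Sum>j\<in>UNIV. c i j * (2 * (f i)\<^sup>2)) + (\<Sum>i\<in>UNIV. \<Sum>j\<in>UNIV. c i j * (2 * (f j)\<^sup>2))"
      unfolding A_def B_def by (simp add: sum.distrib[symmetric] algebra_simps power2_eq_square)
    also have "(\<Sum>i\<in>UNIV. \<Sum>j\<in>UNIV. c i j * (2 * (f j)\<^sup>2)) = (\<Sum>i\<in>UNIV. \<Sum>j\<in>UNIV. c i j * (2 * (f i)\<^sup>2))"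
      by (rule swap_sym[OF csym])
    also have "(\<Sum>i\<in>UNIV. \<Sum>j\<in>UNIV. c i j * (2 * (f i)\<^sup>2)) = 2 * N"
      unfolding N_def dg_def by (simp add: sum_distrib_left sum_distrib_right algebra_simps)
    finally show ?thesis by simp
  qed
  have P2: "(2 * hh * N)\<^sup>2 \<le> P\<^sup>2"
    using Q PQ hh N0 by (intro power_mono) auto
  have key: "(2 * N - A)\<^sup>2 \<le> (2 * N)\<^sup>2 * (1 - hh\<^sup>2)"
  proof -
    have "A * B = A * (4 * N - A)" using AB by simp
    then show ?thesis using P2 CS by (simp add: power2_eq_square algebra_simps)
  qed
  have "\<bar>2 * N - A\<bar> \<le> 2 * N * sqrt (1 - hh\<^sup>2)"
  proof -
    have "sqrt ((2 * N - A)\<^sup>2) \<le> sqrt ((2 * N)\<^sup>2 * (1 - hh\<^sup>2))"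
      using key by (rule real_sqrt_le_mono)
    then show ?thesis using N0 by (simp add: real_sqrt_mult)
  qed
  then have "2 * N - A \<le> 2 * N * sqrt (1 - hh\<^sup>2)" by simp
  then show ?thesis unfolding N_def[symmetric] A_def[symmetric] by (simp add: algebra_simps)
qed

lemma mu_compl: "mu c A + mu c (-A) = mu c (UNIV :: 'n::finite set)"
proof -
  have "sum (dg c) A + sum (dg c) (-A) = sum (dg c) (A \<union> -A)"
    by (rule sum.union_disjoint[symmetric]) auto
  then show ?thesis by (simp add: mu_dg)
qed

lemma mu_mono: assumes c0: "\<And>i j. 0 \<le> c i j" and "A \<subseteq> B"
  shows "mu c A \<le> mu c (B :: 'n::finite set)"
  unfolding mu_dg using assms by (intro sum_mono2) (auto simp: dg_def intro: sum_nonneg)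

lemma mu_nonneg: assumes c0: "\<And>i j. 0 \<le> c i j" shows "0 \<le> mu c (A :: 'n::finite set)"
  unfolding mu_dg dg_def using c0 by (intro sum_nonneg) auto

lemma lev_half:
  fixes c :: "'n::finite \<Rightarrow> 'n \<Rightarrow> real"
  assumes c0: "\<And>i j. 0 \<le> c i j" and hh: "0 \<le> hh"
   and cond: "\<And>A. A \<noteq> {} \<Longrightarrow> A \<noteq> UNIV \<Longrightarrow> hh * min (mu c A) (mu c (-A)) \<le> tau c A"
   and half: "mu c T \<le> mu c UNIV / 2"
  shows "hh * mu c T \<le> tau c T"
proof -
  have cmp: "mu c T + mu c (-T) = mu c UNIV" by (rule mu_compl)
  show ?thesis
  proof (cases "T = {}")
    case True then show ?thesis by (simp add: mu_def tau_def)
  next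
    case F1: False
    show ?thesis
    proof (cases "T = UNIV")
      case True
      then have "mu c T \<le> 0" using half by simp
      moreover have "tau c T = 0" using True by (simp add: tau_def)
      ultimately show ?thesis using hh by (simp add: mult_nonneg_nonpos)
    next
      case False
      have "min (mu c T) (mu c (-T)) = mu c T" using cmp half by simp
      then show ?thesis using cond[OF F1 False] by simp
    qed
  qed
qed

lemma median_exists:
  fixes c :: "'n::finite \<Rightarrow> 'n \<Rightarrow> real" and x :: "'n \<Rightarrow> real"
  assumes c0: "\<And>i j. 0 \<le> c i j"
  shows "\<exists>m. mu c {u. m < x u} \<le> mu c UNIV / 2 \<and> mu c {u. x u < m} \<le> mu c UNIV / 2"
proof -
  define V where "V = range x"
  define Q where "Q = {t \<in> V. mu c {u. t < x u} \<le> mu c UNIV / 2}"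
  have fV: "finite V" unfolding V_def by simp
  have "Max V \<in> Q"
  proof -
    have "Max V \<in> V" using fV by (intro Max_in) (auto simp: V_def)
    moreover have "{u. Max V < x u} = {}" using fV by (auto simp: V_def not_less)
    moreover have "0 \<le> mu c UNIV" using mu_nonneg[of c, OF c0] .
    ultimately show ?thesis by (simp add: Q_def mu_def)
  qed
  then have Qne: "Q \<noteq> {}" by auto
  have fQ: "finite Q" using fV by (simp add: Q_def)
  define m where "m = Min Q"
  have mQ: "m \<in> Q" unfolding m_def using fQ Qne by (rule Min_in)
  have mmin: "\<And>t. t \<in> Q \<Longrightarrow> m \<le> t" unfolding m_def using fQ by simp
  have "mu c {u. x u < m} \<le> mu c UNIV / 2"
  proof (cases "{u. x u < m} = {}")
    case True then show ?thesis using mu_nonneg[of c, OF c0, of UNIV] by (simp add: mu_def)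
  next
    case False
    define t where "t = Max (x ` {u. x u < m})"
    have tin: "t \<in> x ` {u. x u < m}" unfolding t_def using False by (intro Max_in) auto
    then have tV: "t \<in> V" and tm: "t < m" by (auto simp: V_def)
    have "t \<notin> Q" using mmin tm by force
    then have big: "mu c UNIV / 2 < mu c {u. t < x u}" using tV by (simp add: Q_def)
    have eq: "{u. x u < m} = - {u. t < x u}"
    proof (intro set_eqI iffI)
      fix u assume "u \<in> {u. x u < m}"
      then have "x u \<le> t" unfolding t_def by (intro Max_ge) auto
      then show "u \<in> - {u. t < x u}" by auto
    next
      fix u assume "u \<in> - {u. t < x u}"
      then show "u \<in> {u. x u < m}" using tm by auto
    qed
    have "mu c {u. t < x u} + mu c (- {u. t < x u}) = mu c UNIV" by (rule mu_compl)
    then show ?thesis using big eq by simp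
  qed
  then show ?thesis using mQ by (auto simp: Q_def)
qed

lemma pos_neg_split:
  fixes a b :: real
  shows "(max a 0 - max b 0)\<^sup>2 + (max (- a) 0 - max (- b) 0)\<^sup>2 \<le> (a - b)\<^sup>2"
  by (cases "0 \<le> a"; cases "0 \<le> b") (auto simp: max_def power2_eq_square algebra_simps mult_nonneg_nonpos mult_nonpos_nonneg)

lemma sq_split: fixes a :: real shows "a\<^sup>2 = (max a 0)\<^sup>2 + (max (- a) 0)\<^sup>2"
  by (auto simp: max_def)

lemma spectral_bound:
  fixes c :: "'n::finite \<Rightarrow> 'n \<Rightarrow> real" and x :: "'n \<Rightarrow> real"
  assumes c0: "\<And>i j. 0 \<le> c i j" and csym: "\<And>i j. c i j = c j i" and hh: "0 \<le> hh"
   and cond: "\<And>A. A \<noteq> {} \<Longrightarrow> A \<noteq> UNIV \<Longrightarrow> hh * min (mu c A) (mu c (-A)) \<le> tau c A"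
  shows "\<exists>m. 2 * (1 - sqrt (1 - hh\<^sup>2)) * (\<Sum>i\<in>UNIV. dg c i * (x i - m)\<^sup>2)
           \<le> (\<Sum>i\<in>UNIV. \<Sum>j\<in>UNIV. c i j * (x i - x j)\<^sup>2)"
proof -
  obtain m where m1: "mu c {u. m < x u} \<le> mu c UNIV / 2" and m2: "mu c {u. x u < m} \<le> mu c UNIV / 2"
    using median_exists[of c, OF c0] by blast
  define fp where "fp i = max (x i - m) 0" for i
  define fm where "fm i = max (- (x i - m)) 0" for i
  define lam where "lam = 2 * (1 - sqrt (1 - hh\<^sup>2))"
  have levp: "hh * mu c {u. t < fp u} \<le> tau c {u. t < fp u}" if "0 \<le> t" for t
  proof (rule lev_half[of c, OF c0 hh cond])
    have "{u. t < fp u} \<subseteq> {u. m < x u}" using that by (auto simp: fp_def)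
    then show "mu c {u. t < fp u} \<le> mu c UNIV / 2" using m1 mu_mono[of c, OF c0] by (meson order_trans)
  qed
  have levm: "hh * mu c {u. t < fm u} \<le> tau c {u. t < fm u}" if "0 \<le> t" for t
  proof (rule lev_half[of c, OF c0 hh cond])
    have "{u. t < fm u} \<subseteq> {u. x u < m}" using that by (auto simp: fm_def)
    then show "mu c {u. t < fm u} \<le> mu c UNIV / 2" using m2 mu_mono[of c, OF c0] by (meson order_trans)
  qed
  have p: "lam * (\<Sum>i\<in>UNIV. dg c i * (fp i)\<^sup>2) \<le> (\<Sum>i\<in>UNIV. \<Sum>j\<in>UNIV. c i j * (fp i - fp j)\<^sup>2)"
    unfolding lam_def by (rule cheeger_step[of c, OF c0 csym _ hh levp]) (simp add: fp_def)
  have n: "lam * (\<Sum>i\<in>UNIV. dg c i * (fm i)\<^sup>2) \<le> (\<Sum>i\<in>UNIV. \<Sum>j\<in>UNIV. c i j * (fm i - fm j)\<^sup>2)"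
    unfolding lam_def by (rule cheeger_step[of c, OF c0 csym _ hh levm]) (simp add: fm_def)
  have "lam * (\<Sum>i\<in>UNIV. dg c i * (x i - m)\<^sup>2)
      = lam * (\<Sum>i\<in>UNIV. dg c i * (fp i)\<^sup>2) + lam * (\<Sum>i\<in>UNIV. dg c i * (fm i)\<^sup>2)"
    by (subst sq_split) (simp add: fp_def fm_def algebra_simps sum.distrib sum_distrib_left)
  also have "\<dots> \<le> (\<Sum>i\<in>UNIV. \<Sum>j\<in>UNIV. c i j * (fp i - fp j)\<^sup>2) + (\<Sum>i\<in>UNIV. \<Sum>j\<in>UNIV. c i j * (fm i - fm j)\<^sup>2)"
    using p n by simp
  also have "\<dots> = (\<Sum>i\<in>UNIV. \<Sum>j\<in>UNIV. c i j * ((fp i - fp j)\<^sup>2 + (fm i - fm j)\<^sup>2))"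
    by (simp add: sum.distrib algebra_simps)
  also have "\<dots> \<le> (\<Sum>i\<in>UNIV. \<Sum>j\<in>UNIV. c i j * (x i - x j)\<^sup>2)"
  proof (intro sum_mono mult_left_mono c0)
    fix i j
    show "(fp i - fp j)\<^sup>2 + (fm i - fm j)\<^sup>2 \<le> (x i - x j)\<^sup>2"
      using pos_neg_split[of "x i - m" "x j - m"] by (simp add: fp_def fm_def)
  qed
  finally show ?thesis unfolding lam_def by blast
qed

lemma path_cross:
  assumes "(\<lambda>a b. P a b)\<^sup>*\<^sup>* i j" "i \<in> A" "j \<notin> A"
  shows "\<exists>a b. a \<in> A \<and> b \<notin> A \<and> P a b"
  using assms by (induction rule: rtranclp_induct) auto

lemma tau_sym2:
  fixes f :: "'n::finite \<Rightarrow> 'n \<Rightarrow> real"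
  assumes sym: "\<And>i j. f i j = f j i"
  shows "(\<Sum>a\<in>UNIV. \<Sum>b\<in>UNIV. f a b * (if (a \<in> A) \<noteq> (b \<in> A) then 1 else 0)) = 2 * tau f A"
proof -
  have "(\<Sum>a\<in>UNIV. \<Sum>b\<in>UNIV. f a b * (if (a \<in> A) \<noteq> (b \<in> A) then 1 else 0))
     = (\<Sum>a\<in>UNIV. \<Sum>b\<in>UNIV. f a b * (if a \<in> A \<and> b \<notin> A then 1 else 0))
     + (\<Sum>a\<in>UNIV. \<Sum>b\<in>UNIV. f a b * (if b \<in> A \<and> a \<notin> A then 1 else 0))"
    unfolding sum.distrib[symmetric] by (intro sum.cong refl) auto
  also have "(\<Sum>a\<in>UNIV. \<Sum>b\<in>UNIV. f a b * (if b \<in> A \<and> a \<notin> A then 1 else 0))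
      = (\<Sum>a\<in>UNIV. \<Sum>b\<in>UNIV. f a b * (if a \<in> A \<and> b \<notin> A then 1 else 0))"
    using swap_sym[of f "\<lambda>b a. (if a \<in> A \<and> b \<notin> A then 1 else 0)", OF sym] by simp
  finally show ?thesis by (simp add: tau_ind)
qed

lemma wcut_props:
  assumes "maxcut_instance w"
  shows "\<And>i j. 0 \<le> w_cut w S i j" "\<And>i j. w_cut w S i j = w_cut w S j i"
    "\<And>i j. 0 \<le> w_uncut w S i j" "\<And>i j. w_uncut w S i j = w_uncut w S j i"
  using assms by (auto simp: maxcut_instance_def w_cut_def w_uncut_def)

lemma tau_pos:
  fixes w :: "'n::finite \<Rightarrow> 'n \<Rightarrow> real"
  assumes mi: "maxcut_instance w" and mc: "is_max_cut w S" and A: "A \<noteq> {}" "A \<noteq> UNIV"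
  shows "0 < tau (w_cut w S) A"
proof (rule ccontr)
  let ?c = "w_cut w S" and ?u = "w_uncut w S"
  assume "\<not> 0 < tau ?c A"
  moreover have "0 \<le> tau ?c A" unfolding tau_def using wcut_props(1)[OF mi] by (intro sum_nonneg) auto
  ultimately have t0: "tau ?c A = 0" by simp
  have wsym: "\<And>i j. w i j = w j i" and w0: "\<And>i j. 0 \<le> w i j" and conn: "\<And>i j. (\<lambda>a b. 0 < w a b)\<^sup>*\<^sup>* i j"
    using mi by (auto simp: maxcut_instance_def)
  obtain i j where "i \<in> A" "j \<notin> A" using A by auto
  then obtain a b where ab: "a \<in> A" "b \<notin> A" "0 < w a b" using path_cross[OF conn[of i j]] by blast
  have cab: "?c a b = 0"
  proof -
    have "(\<Sum>b\<in>-A. ?c a b) \<le> (\<Sum>a\<in>A. \<Sum>b\<in>-A. ?c a b)"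
      using ab(1) wcut_props(1)[OF mi] by (intro member_le_sum sum_nonneg) auto
    moreover have "?c a b \<le> (\<Sum>b\<in>-A. ?c a b)"
      using ab(2) wcut_props(1)[OF mi] by (intro member_le_sum) auto
    ultimately show ?thesis using t0 wcut_props(1)[OF mi, of S a b] by (simp add: tau_def)
  qed
  have tu: "0 < tau ?u A"
  proof -
    have "?u a b \<le> (\<Sum>b\<in>-A. ?u a b)"
      using ab(2) wcut_props(3)[OF mi] by (intro member_le_sum) auto
    also have "\<dots> \<le> (\<Sum>a\<in>A. \<Sum>b\<in>-A. ?u a b)"
      using ab(1) wcut_props(3)[OF mi] by (intro member_le_sum sum_nonneg) auto
    finally show ?thesis using cab ab(3) by (simp add: tau_def w_uncut_def)
  qed
  define T where "T = {x. (x \<in> S) \<noteq> (x \<in> A)}"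
  have cw: "2 * cut_weight w X = (\<Sum>a\<in>UNIV. \<Sum>b\<in>UNIV. w a b * (if (a \<in> X) \<noteq> (b \<in> X) then 1 else 0))" for X
    using tau_sym2[of w X, OF wsym] by (simp add: cut_weight_def tau_def)
  have pw: "w a b * (if (a \<in> T) \<noteq> (b \<in> T) then 1 else 0) - w a b * (if (a \<in> S) \<noteq> (b \<in> S) then 1 else 0)
     = ?u a b * (if (a \<in> A) \<noteq> (b \<in> A) then 1 else 0) - ?c a b * (if (a \<in> A) \<noteq> (b \<in> A) then 1 else 0)" for a b
    by (auto simp: T_def w_uncut_def w_cut_def)
  have "2 * cut_weight w T - 2 * cut_weight w S = 2 * tau ?u A - 2 * tau ?c A"
    unfolding cw tau_sym2[of ?u A, OF wcut_props(4)[OF mi], symmetric]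
       tau_sym2[of ?c A, OF wcut_props(2)[OF mi], symmetric]
    by (simp only: sum_subtractf[symmetric] pw)
  then have "cut_weight w S < cut_weight w T" using tu t0 by simp
  then show False using mc by (auto simp: is_max_cut_def not_less[symmetric])
qed

lemma form1:
  fixes w :: "'n::finite \<Rightarrow> 'n \<Rightarrow> real"
  shows "v \<bullet> ((wmat w + Dprime w S) *v v) = (\<Sum>i\<in>UNIV. \<Sum>j\<in>UNIV. w i j * (v$i * v$j))
     + (\<Sum>i\<in>UNIV. (dg (w_cut w S) i - dg (w_uncut w S) i) * (v$i)\<^sup>2)"
proof -
  have r: "((wmat w + Dprime w S) *v v) $ i = (\<Sum>j\<in>UNIV. w i j * v$j) + (dg (w_cut w S) i - dg (w_uncut w S) i) * v$i" for i
  proof -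
    have e: "(wmat w + Dprime w S) $ i $ j = w i j + (if i = j then dg (w_cut w S) i - dg (w_uncut w S) i else 0)" for j
      by (simp add: wmat_def Dprime_def degmat_def dg_def)
    have r: "((wmat w + Dprime w S) *v v) $ i = (\<Sum>j\<in>UNIV. w i j * v$j + (if i = j then (dg (w_cut w S) i - dg (w_uncut w S) i) * v$j else 0))"
      unfolding matrix_vector_mult_def vec_lambda_beta e by (intro sum.cong refl) (simp add: algebra_simps)
    also have "\<dots> = (\<Sum>j\<in>UNIV. w i j * v$j) + (dg (w_cut w S) i - dg (w_uncut w S) i) * v$i"
      by (simp add: sum.distrib)
    finally show ?thesis .
  qed
  have "v \<bullet> ((wmat w + Dprime w S) *v v) = (\<Sum>i\<in>UNIV. v$i * ((\<Sum>j\<in>UNIV. w i j * v$j) + (dg (w_cut w S) i - dg (w_uncut w S) i) * v$i))"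
    unfolding inner_vec_def r inner_real_def by simp
  also have "\<dots> = (\<Sum>i\<in>UNIV. \<Sum>j\<in>UNIV. w i j * (v$i * v$j))
     + (\<Sum>i\<in>UNIV. (dg (w_cut w S) i - dg (w_uncut w S) i) * (v$i)\<^sup>2)"
    unfolding sum.distrib[symmetric] by (intro sum.cong refl) (simp add: sum_distrib_left algebra_simps power2_eq_square)
  finally show ?thesis .
qed

lemma sumsq_dg:
  fixes f :: "'n::finite \<Rightarrow> 'n \<Rightarrow> real"
  assumes sym: "\<And>i j. f i j = f j i"
  shows "(\<Sum>i\<in>UNIV. \<Sum>j\<in>UNIV. f i j * a j) = (\<Sum>i\<in>UNIV. dg f i * a i)"
    and "(\<Sum>i\<in>UNIV. \<Sum>j\<in>UNIV. f i j * a i) = (\<Sum>i\<in>UNIV. dg f i * a i)"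
proof -
  show 2: "(\<Sum>i\<in>UNIV. \<Sum>j\<in>UNIV. f i j * a i) = (\<Sum>i\<in>UNIV. dg f i * a i)"
    by (simp add: dg_def sum_distrib_right)
  show "(\<Sum>i\<in>UNIV. \<Sum>j\<in>UNIV. f i j * a j) = (\<Sum>i\<in>UNIV. dg f i * a i)"
    using swap_sym[of f "\<lambda>j i. a i", OF sym] 2 by simp
qed

definition sx :: "'n set \<Rightarrow> real^'n \<Rightarrow> 'n \<Rightarrow> real" where
  "sx S v i = (if i \<in> S then v$i else - v$i)"

lemma form2:
  fixes w :: "'n::finite \<Rightarrow> 'n \<Rightarrow> real"
  assumes mi: "maxcut_instance w"
  shows "2 * (v \<bullet> ((wmat w + Dprime w S) *v v))
     = (\<Sum>i\<in>UNIV. \<Sum>j\<in>UNIV. w_cut w S i j * (sx S v i - sx S v j)\<^sup>2)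
     - (\<Sum>i\<in>UNIV. \<Sum>j\<in>UNIV. w_uncut w S i j * (sx S v i - sx S v j)\<^sup>2)"
proof -
  let ?c = "w_cut w S" and ?u = "w_uncut w S"
  have pc: "?c i j * (sx S v i - sx S v j)\<^sup>2 = ?c i j * (v$i)\<^sup>2 + ?c i j * (v$j)\<^sup>2 + 2 * (?c i j * (v$i * v$j))" for i j
    by (auto simp: sx_def w_cut_def power2_eq_square algebra_simps)
  have pu: "?u i j * (sx S v i - sx S v j)\<^sup>2 = ?u i j * (v$i)\<^sup>2 + ?u i j * (v$j)\<^sup>2 - 2 * (?u i j * (v$i * v$j))" for i j
    by (auto simp: sx_def w_uncut_def w_cut_def power2_eq_square algebra_simps)
  have wcu: "w i j = ?c i j + ?u i j" for i j by (simp add: w_uncut_def)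
  have C: "(\<Sum>i\<in>UNIV. \<Sum>j\<in>UNIV. ?c i j * (sx S v i - sx S v j)\<^sup>2)
     = 2 * (\<Sum>i\<in>UNIV. dg ?c i * (v$i)\<^sup>2) + 2 * (\<Sum>i\<in>UNIV. \<Sum>j\<in>UNIV. ?c i j * (v$i * v$j))"
    unfolding pc sum.distrib sumsq_dg[OF wcut_props(2)[OF mi]] by (simp add: sum_distrib_left)
  have U: "(\<Sum>i\<in>UNIV. \<Sum>j\<in>UNIV. ?u i j * (sx S v i - sx S v j)\<^sup>2)
     = 2 * (\<Sum>i\<in>UNIV. dg ?u i * (v$i)\<^sup>2) - 2 * (\<Sum>i\<in>UNIV. \<Sum>j\<in>UNIV. ?u i j * (v$i * v$j))"
    unfolding pu sum.distrib sum_subtractf sumsq_dg[OF wcut_props(4)[OF mi]] by (simp add: sum_distrib_left)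
  have W: "(\<Sum>i\<in>UNIV. \<Sum>j\<in>UNIV. w i j * (v$i * v$j)) = (\<Sum>i\<in>UNIV. \<Sum>j\<in>UNIV. ?c i j * (v$i * v$j))
      + (\<Sum>i\<in>UNIV. \<Sum>j\<in>UNIV. ?u i j * (v$i * v$j))"
    unfolding sum.distrib[symmetric] by (intro sum.cong refl) (simp add: wcu algebra_simps)
  show ?thesis unfolding form1 C U W by (simp add: sum_subtractf algebra_simps left_diff_distrib)
qed

lemma sq_tri: fixes a b m :: real shows "(a - b)\<^sup>2 \<le> 2 * (a - m)\<^sup>2 + 2 * (b - m)\<^sup>2"
proof -
  have "2 * (a - m)\<^sup>2 + 2 * (b - m)\<^sup>2 = (a - b)\<^sup>2 + (a + b - 2 * m)\<^sup>2"
    by (simp add: power2_eq_square algebra_simps)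
  then show ?thesis by simp
qed

lemma key:
  fixes w :: "'n::finite \<Rightarrow> 'n \<Rightarrow> real" and S :: "'n set" and \<gamma> :: real
  assumes mi: "maxcut_instance w"
    and mc: "is_max_cut w S"
    and xg: "\<And>x. xi w S x \<ge> \<gamma> * iota w S x"
    and gam: "\<gamma> > 2 / (1 - sqrt (1 - (cheeger (w_cut w S))\<^sup>2))"
    and nc: "\<not> (\<exists>m. \<forall>i. sx S v i = m)"
  shows "0 < v \<bullet> ((wmat w + Dprime w S) *v v)"
proof -
  let ?c = "w_cut w S" and ?u = "w_uncut w S" and ?x = "sx S v"
  note c0 = wcut_props(1)[OF mi] and csym = wcut_props(2)[OF mi]
   and u0 = wcut_props(3)[OF mi] and usym = wcut_props(4)[OF mi]
  define j0 :: 'n where "j0 = undefined"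
  obtain i0 where ij: "?x i0 \<noteq> ?x j0" using nc by blast
  then have i0j0: "i0 \<noteq> j0" by auto
  have dpos: "0 < dg ?c i" for i
  proof -
    have ne: "{i} \<noteq> UNIV" using i0j0 by (metis UNIV_I singletonD)
    have "0 < tau ?c {i}" by (rule tau_pos[OF mi mc]) (use ne in auto)
    also have "tau ?c {i} \<le> dg ?c i" unfolding tau_def dg_def
      using c0 by (simp add: sum_mono2)
    finally show ?thesis .
  qed
  have mupos: "A \<noteq> {} \<Longrightarrow> 0 < mu ?c A" for A
    unfolding mu_dg using dpos by (intro sum_pos) auto
  define Sets where "Sets = {A :: 'n set. A \<noteq> {} \<and> A \<noteq> UNIV}"
  define F where "F A = tau ?c A / min (mu ?c A) (mu ?c (-A))" for A
  have hdef: "cheeger ?c = Min (F ` Sets)" by (simp add: cheeger_def F_def Sets_def)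
  have Setsne: "{i0} \<in> Sets" using i0j0 by (auto simp: Sets_def)
  have fS: "finite (F ` Sets)" by simp
  have Fpos: "0 < F A" if "A \<in> Sets" for A
  proof -
    have A: "A \<noteq> {}" "A \<noteq> UNIV" using that by (auto simp: Sets_def)
    then have "-A \<noteq> {}" by auto
    then have "0 < min (mu ?c A) (mu ?c (-A))" using mupos A by auto
    then show ?thesis unfolding F_def using tau_pos[OF mi mc A] by simp
  qed
  have hpos: "0 < cheeger ?c"
  proof -
    have "cheeger ?c \<in> F ` Sets" unfolding hdef using Setsne by (intro Min_in fS) auto
    then show ?thesis using Fpos by auto
  qed
  have cond: "cheeger ?c * min (mu ?c A) (mu ?c (-A)) \<le> tau ?c A" if "A \<noteq> {}" "A \<noteq> UNIV" for A
  proof -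
    have AS: "A \<in> Sets" using that by (simp add: Sets_def)
    have "cheeger ?c \<le> F A" unfolding hdef using AS fS by simp
    moreover have "-A \<noteq> {}" using that by auto
    then have "0 < min (mu ?c A) (mu ?c (-A))" using mupos that by auto
    ultimately show ?thesis unfolding F_def by (simp add: pos_le_divide_eq)
  qed
  define h where "h = cheeger ?c"
  define l where "l = 1 - sqrt (1 - h\<^sup>2)"
  have lpos: "0 < l"
  proof -
    have "1 - h\<^sup>2 < 1" using hpos by (simp add: h_def)
    then have "sqrt (1 - h\<^sup>2) < 1" by (simp add: real_sqrt_less_iff)
    then show ?thesis by (simp add: l_def)
  qed
  have gl: "2 < \<gamma> * l" using gam lpos by (simp add: l_def h_def pos_divide_less_eq)
  have gpos: "0 < \<gamma>"
  proof (rule ccontr)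
    assume "\<not> 0 < \<gamma>"
    then have "\<gamma> * l \<le> 0" using lpos by (simp add: mult_nonpos_nonneg)
    then show False using gl by simp
  qed
  obtain m where mb: "2 * l * (\<Sum>i\<in>UNIV. dg ?c i * (?x i - m)\<^sup>2)
           \<le> (\<Sum>i\<in>UNIV. \<Sum>j\<in>UNIV. ?c i j * (?x i - ?x j)\<^sup>2)"
  proof -
    obtain m where "2 * (1 - sqrt (1 - (cheeger ?c)\<^sup>2)) * (\<Sum>i\<in>UNIV. dg ?c i * (?x i - m)\<^sup>2)
           \<le> (\<Sum>i\<in>UNIV. \<Sum>j\<in>UNIV. ?c i j * (?x i - ?x j)\<^sup>2)"
      using spectral_bound[of ?c "cheeger ?c" ?x, OF c0 csym less_imp_le[OF hpos] cond] by blast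
    then show ?thesis using that unfolding l_def h_def by blast
  qed
  define E where "E = (\<Sum>i\<in>UNIV. dg ?c i * (?x i - m)\<^sup>2)"
  define Ac where "Ac = (\<Sum>i\<in>UNIV. \<Sum>j\<in>UNIV. ?c i j * (?x i - ?x j)\<^sup>2)"
  define Au where "Au = (\<Sum>i\<in>UNIV. \<Sum>j\<in>UNIV. ?u i j * (?x i - ?x j)\<^sup>2)"
  have Epos: "0 < E"
  proof -
    obtain k where k: "?x k \<noteq> m" using nc by blast
    have kk: "0 < dg ?c k * (?x k - m)\<^sup>2" using dpos k by simp
    show ?thesis unfolding E_def
    proof (rule sum_pos2[where i=k])
      fix i show "0 \<le> dg ?c i * (?x i - m)\<^sup>2" using dpos[of i] by simp
    qed (use kk in auto)
  qed
  have Au: "Au \<le> 4 * (\<Sum>i\<in>UNIV. dg ?u i * (?x i - m)\<^sup>2)"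
  proof -
    have "Au \<le> (\<Sum>i\<in>UNIV. \<Sum>j\<in>UNIV. ?u i j * (2 * (?x i - m)\<^sup>2) + ?u i j * (2 * (?x j - m)\<^sup>2))"
      unfolding Au_def
    proof (rule sum_mono, rule sum_mono)
      fix i j
      have "?u i j * (?x i - ?x j)\<^sup>2 \<le> ?u i j * (2 * (?x i - m)\<^sup>2 + 2 * (?x j - m)\<^sup>2)"
        by (rule mult_left_mono[OF sq_tri u0])
      then show "?u i j * (?x i - ?x j)\<^sup>2 \<le> ?u i j * (2 * (?x i - m)\<^sup>2) + ?u i j * (2 * (?x j - m)\<^sup>2)"
        by (simp only: distrib_left)
    qed
    also have "\<dots> = (\<Sum>i\<in>UNIV. \<Sum>j\<in>UNIV. ?u i j * (2 * (?x i - m)\<^sup>2)) + (\<Sum>i\<in>UNIV. \<Sum>j\<in>UNIV. ?u i j * (2 * (?x j - m)\<^sup>2))"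
      by (simp only: sum.distrib)
    also have "\<dots> = (\<Sum>i\<in>UNIV. dg ?u i * (2 * (?x i - m)\<^sup>2)) + (\<Sum>i\<in>UNIV. dg ?u i * (2 * (?x i - m)\<^sup>2))"
      by (simp only: sumsq_dg[OF usym])
    also have "\<dots> = 4 * (\<Sum>i\<in>UNIV. dg ?u i * (?x i - m)\<^sup>2)"
      by (simp add: sum_distrib_left mult.left_commute)
    finally show ?thesis .
  qed
  have uc: "\<gamma> * (\<Sum>i\<in>UNIV. dg ?u i * (?x i - m)\<^sup>2) \<le> E"
    unfolding E_def sum_distrib_left
  proof (intro sum_mono)
    fix i
    have "\<gamma> * dg ?u i \<le> dg ?c i" using xg[of i] by (simp add: xi_def iota_def dg_def)
    then have "\<gamma> * dg ?u i * (?x i - m)\<^sup>2 \<le> dg ?c i * (?x i - m)\<^sup>2"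
      by (intro mult_right_mono) auto
    then show "\<gamma> * (dg ?u i * (?x i - m)\<^sup>2) \<le> dg ?c i * (?x i - m)\<^sup>2"
      by (simp add: mult.assoc)
  qed
  have "\<gamma> * Au \<le> \<gamma> * (4 * (\<Sum>i\<in>UNIV. dg ?u i * (?x i - m)\<^sup>2))"
    using Au gpos by (intro mult_left_mono) auto
  also have "\<dots> = 4 * (\<gamma> * (\<Sum>i\<in>UNIV. dg ?u i * (?x i - m)\<^sup>2))" by simp
  also have "\<dots> \<le> 4 * E" using uc by simp
  finally have "\<gamma> * Au \<le> 4 * E" .
  moreover have "4 * E < \<gamma> * (2 * l) * E" using mult_strict_right_mono[of 4 "\<gamma> * (2 * l)" E] gl Epos by simp
  moreover have "\<gamma> * (2 * l * E) \<le> \<gamma> * Ac" using mb gpos unfolding E_def Ac_def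
    by (intro mult_left_mono) auto
  then have "\<gamma> * (2 * l) * E \<le> \<gamma> * Ac" by (simp add: mult.assoc)
  ultimately have "0 < \<gamma> * (Ac - Au)" by (simp add: algebra_simps)
  then have "0 < Ac - Au" using gpos by (simp add: zero_less_mult_iff)
  then show ?thesis using form2[OF mi, where S=S and v=v] unfolding Ac_def Au_def by simp
qed

lemma mv_entry:
  fixes w :: "'n::finite \<Rightarrow> 'n \<Rightarrow> real"
  shows "((wmat w + Dprime w S) *v v) $ i = (\<Sum>j\<in>UNIV. w i j * v$j) + (dg (w_cut w S) i - dg (w_uncut w S) i) * v$i"
proof -
  have e: "(wmat w + Dprime w S) $ i $ j = w i j + (if i = j then dg (w_cut w S) i - dg (w_uncut w S) i else 0)" for j
    by (simp add: wmat_def Dprime_def degmat_def dg_def)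
  have "((wmat w + Dprime w S) *v v) $ i = (\<Sum>j\<in>UNIV. w i j * v$j + (if i = j then (dg (w_cut w S) i - dg (w_uncut w S) i) * v$j else 0))"
    unfolding matrix_vector_mult_def vec_lambda_beta e by (intro sum.cong refl) (simp add: algebra_simps)
  also have "\<dots> = (\<Sum>j\<in>UNIV. w i j * v$j) + (dg (w_cut w S) i - dg (w_uncut w S) i) * v$i"
    by (simp add: sum.distrib)
  finally show ?thesis .
qed

theorem lemma2:
  fixes w :: "'n::finite \<Rightarrow> 'n \<Rightarrow> real" and S :: "'n set" and \<gamma> :: real
  assumes "maxcut_instance w"
    and "is_max_cut w S"
    and "\<And>x. xi w S x \<ge> \<gamma> * iota w S x"
    and "\<gamma> > 2 / (1 - sqrt (1 - (cheeger (w_cut w S))\<^sup>2))"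
  shows "psd (wmat w + Dprime w S) \<and> rank (wmat w + Dprime w S) = CARD('n) - 1"
proof -
  note mi = assms(1)
  define M where "M = wmat w + Dprime w S"
  let ?c = "w_cut w S" and ?u = "w_uncut w S"
  have QQ: "0 \<le> v \<bullet> (M *v v) \<and> (v \<bullet> (M *v v) = 0 \<longrightarrow> (\<exists>m. \<forall>i. sx S v i = m))" for v
  proof (cases "\<exists>m. \<forall>i. sx S v i = m")
    case True
    then obtain m where m: "\<And>i. sx S v i = m" by blast
    have "2 * (v \<bullet> (M *v v)) = 0" unfolding M_def form2[OF mi, where S=S and v=v] m by simp
    then show ?thesis using True by simp
  next
    case False
    then show ?thesis using key[OF assms False] unfolding M_def by simp
  qed
  have psdM: "psd M" unfolding psd_def using QQ by blast
  define s :: "real^'n" where "s = (\<chi> i. if i \<in> S then 1 else -1)"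
  have s0: "s \<noteq> 0"
  proof
    assume "s = 0"
    then have "s $ undefined = 0" by simp
    then show False by (simp add: s_def split: if_splits)
  qed
  have Ms: "M *v s = 0"
  proof (rule vec_eq_iff[THEN iffD2], rule allI)
    fix i
    have pw: "w i j * s$j = - (?c i j * s$i) + ?u i j * s$i" for j
      by (auto simp: s_def w_cut_def w_uncut_def)
    have "(\<Sum>j\<in>UNIV. w i j * s$j) = - (dg ?c i * s$i) + dg ?u i * s$i"
      unfolding pw sum.distrib dg_def by (simp add: sum_distrib_right sum_negf)
    then show "(M *v s) $ i = 0 $ i" unfolding M_def mv_entry by (simp add: algebra_simps)
  qed
  have Msym: "transpose M = M"
    unfolding M_def using mi
    by (simp add: transpose_def wmat_def Dprime_def degmat_def maxcut_instance_def vec_eq_iff w_cut_def w_uncut_def)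
  define H where "H = {y :: real^'n. s \<bullet> y = 0}"
  have dimH: "dim H = CARD('n) - 1" unfolding H_def using dim_hyperplane[OF s0] by simp
  have rng: "range ((*v) M) \<subseteq> H"
  proof
    fix y assume "y \<in> range ((*v) M)"
    then obtain v where y: "y = M *v v" by blast
    have "s \<bullet> (M *v v) = (s v* M) \<bullet> v" by (simp add: dot_lmul_matrix)
    also have "s v* M = transpose M *v s" by simp
    also have "\<dots> = 0" using Msym Ms by simp
    finally show "y \<in> H" using y by (simp add: H_def)
  qed
  have ker: "M *v v = 0 \<Longrightarrow> v = (v \<bullet> s / CARD('n)) *\<^sub>R s" for v
  proof -
    assume "M *v v = 0"
    then have "v \<bullet> (M *v v) = 0" by simp
    then obtain m where m: "\<And>i. sx S v i = m" using QQ[of v] by blast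
    have vm: "v = m *\<^sub>R s"
      by (rule vec_eq_iff[THEN iffD2], rule allI) (use m in \<open>auto simp: s_def sx_def split: if_splits; metis minus_minus\<close>)
    have s1: "s$i * s$i = 1" for i by (simp add: s_def)
    have ss: "s \<bullet> s = real CARD('n)" by (simp add: inner_vec_def s1)
    have "v \<bullet> s = m * real CARD('n)" unfolding vm using ss by simp
    then show ?thesis using vm ss by simp
  qed
  have inj: "inj_on ((*v) M) (span H)"
  proof -
    have sH: "span H = H" unfolding H_def by (simp add: span_eq_iff subspace_hyperplane)
    have "y = z" if "y \<in> H" "z \<in> H" "M *v y = M *v z" for y z
    proof -
      have "M *v (y - z) = 0" using that by (simp add: matrix_vector_mult_diff_distrib)
      then have yz: "y - z = ((y - z) \<bullet> s / CARD('n)) *\<^sub>R s" by (rule ker)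
      have "s \<bullet> (y - z) = 0" using that by (simp add: H_def inner_diff_right)
      then have "(y - z) \<bullet> s = 0" by (simp only: inner_commute)
      then show ?thesis using yz by simp
    qed
    then show ?thesis unfolding sH inj_on_def by blast
  qed
  have "dim ((*v) M ` H) = dim H" by (rule eucl.dim_image_eq[OF matrix_vector_mul_linear inj])
  moreover have "dim ((*v) M ` H) \<le> dim (range ((*v) M))" by (rule dim_subset) auto
  moreover have "dim (range ((*v) M)) \<le> dim H" by (rule dim_subset[OF rng])
  ultimately have "rank M = CARD('n) - 1" unfolding rank_dim_range dimH by simp
  then show ?thesis using psdM unfolding M_def by simp
qed

end
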